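(* Let $\alpha:[0,T]\to[0,1]$ be continuously differentiable and strictly decreasing with $\alpha_0=1$ and $\alpha_T=0$. Fix $x_0\in\mathbb{R}^d$ and, for $t\in(0,T]$, let $p_t=\mathcal{N}(\sqrt{\alpha_t}\,x_0,(1-\alpha_t)I_d)$. This is the time-$t$ marginal of the linear SDE $du=F_t u\,dt+G_t\,dw$ with $F_t=\tfrac12\tfrac{d\log\alpha_t}{dt}I_d$, $G_t=\sqrt{-\tfrac{d\log\alpha_t}{dt}}\,I_d$, started from the Dirac distribution $p_0=\delta_{x_0}$. Let $u:(0,T)\to\mathbb{R}^d$ be any solution of the probability flow ODE with the exact score, $$\frac{du}{dt}=F_t u-\tfrac12 G_tG_t^T\nabla\log p_t(u).$$ Then $\epsilon_{\rm GT}(u(t),t):=-\sqrt{1-\alpha_t}\,\nabla\log p_t(u(t))$ is constant in $t\in(0,T)$. Moreover, if $u(t)$ has a limit $u(T)$ as $t\to T$, this constant equals $-\nabla\log p_T(u(T))=u(T)$.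
   Context: $\nabla$ denotes the gradient with respect to the spatial variable. The quantity $\epsilon_{\rm GT}$ is the ground-truth "noise prediction" associated with the score parameterization $s(u,t)=-\epsilon(u,t)/\sqrt{1-\alpha_t}$. *)

theory Defs
  imports "HOL-Analysis.Analysis"
begin

definition grad :: "(real^'n \<Rightarrow> real) \<Rightarrow> real^'n \<Rightarrow> real^'n" where
  "grad f x = (THE g. (f has_derivative (\<lambda>h. g \<bullet> h)) (at x))"

definition gauss_density :: "real^'n \<Rightarrow> real \<Rightarrow> real^'n \<Rightarrow> real" where
  "gauss_density m s v =
     (2 * pi * s) powr (- real CARD('n) / 2) * exp (- (norm (v - m))\<^sup>2 / (2 * s))"

definition marg :: "(real \<Rightarrow> real) \<Rightarrow> real^'n \<Rightarrow> real \<Rightarrow> real^'n \<Rightarrow> real" where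
  "marg \<alpha> x0 t = gauss_density (sqrt (\<alpha> t) *\<^sub>R x0) (1 - \<alpha> t)"

definition score :: "(real \<Rightarrow> real) \<Rightarrow> real^'n \<Rightarrow> real \<Rightarrow> real^'n \<Rightarrow> real^'n" where
  "score \<alpha> x0 t = grad (\<lambda>v. ln (marg \<alpha> x0 t v))"

text \<open>F_t (scalar factor of I_d) and G_t (scalar factor of I_d).\<close>
definition Fcoef :: "(real \<Rightarrow> real) \<Rightarrow> real \<Rightarrow> real" where
  "Fcoef \<alpha> t = 1/2 * deriv (\<lambda>s. ln (\<alpha> s)) t"

definition Gcoef :: "(real \<Rightarrow> real) \<Rightarrow> real \<Rightarrow> real" where
  "Gcoef \<alpha> t = sqrt (- deriv (\<lambda>s. ln (\<alpha> s)) t)"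

definition eps_GT :: "(real \<Rightarrow> real) \<Rightarrow> real^'n \<Rightarrow> real^'n \<Rightarrow> real \<Rightarrow> real^'n" where
  "eps_GT \<alpha> x0 u t = - (sqrt (1 - \<alpha> t) *\<^sub>R score \<alpha> x0 t u)"

end

theory Submission
  imports Defs
begin

lemma grad_eqI:
  fixes f :: "real^'n \<Rightarrow> real"
  assumes "(f has_derivative (\<lambda>h. g \<bullet> h)) (at x)"
  shows "grad f x = g"
  unfolding grad_def
proof (rule the_equality)
  fix g' assume "(f has_derivative (\<lambda>h. g' \<bullet> h)) (at x)"
  from has_derivative_unique[OF assms this] have "\<And>h. g \<bullet> h = g' \<bullet> h" by metis
  from this[of "g - g'"] have "(g - g') \<bullet> (g - g') = 0" by (simp add: inner_diff)
  then show "g' = g" by simp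
qed (rule assms)

lemma grad_gauss:
  fixes m v :: "real^'n"
  assumes s: "s > 0"
  shows "grad (\<lambda>v. ln (gauss_density m s v)) v = - ((1/s) *\<^sub>R (v - m))"
proof -
  define C where "C = ln ((2 * pi * s) powr (- real CARD('n::finite) / 2))"
  have eq: "(\<lambda>v. ln (gauss_density m s v)) = (\<lambda>v. C - (((v - m) \<bullet> (v - m)) / (2 * s)))"
  proof
    fix v :: "real^'n"
    have "(2 * pi * s) powr (- real CARD('n) / 2) > 0" using s by simp
    then show "ln (gauss_density m s v) = C - (((v - m) \<bullet> (v - m)) / (2 * s))"
      unfolding gauss_density_def C_def
      by (simp add: ln_mult power2_norm_eq_inner)
  qed
  have "((\<lambda>v. C - (((v - m) \<bullet> (v - m)) / (2 * s))) has_derivative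
          (\<lambda>h. (- ((1/s) *\<^sub>R (v - m))) \<bullet> h)) (at v)"
    apply (rule derivative_eq_intros refl | simp)+
    using s apply (auto simp: inner_commute field_simps inner_diff)
    done
  then show ?thesis unfolding eq by (rule grad_eqI)
qed


lemma fdl:
  assumes ad: "(\<alpha> has_real_derivative d) (at t)" and a1: "\<alpha> t < 1"
  shows "((\<lambda>t. 1 / sqrt (1 - \<alpha> t)) has_real_derivative d / (2 * (1 - \<alpha> t) * sqrt (1 - \<alpha> t))) (at t)"
proof -
  have h1: "((\<lambda>x. 1 - \<alpha> x) has_real_derivative -d) (at t)"
    using DERIV_diff[OF DERIV_const ad] by simp
  have p: "0 < 1 - \<alpha> t" using a1 by simp
  have h2: "((\<lambda>x. sqrt (1 - \<alpha> x)) has_real_derivative inverse (sqrt (1 - \<alpha> t)) / 2 * (-d)) (at t)"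
    by (rule DERIV_chain2[OF DERIV_real_sqrt[OF p] h1])
  have ne: "sqrt (1 - \<alpha> t) \<noteq> 0" using p by simp
  have ss: "sqrt (1 - \<alpha> t) * sqrt (1 - \<alpha> t) = 1 - \<alpha> t" using p by simp
  have eq: "- (inverse (sqrt (1 - \<alpha> t)) * (inverse (sqrt (1 - \<alpha> t)) / 2 * (-d)) * inverse (sqrt (1 - \<alpha> t)))
     = d / (2 * (1 - \<alpha> t) * sqrt (1 - \<alpha> t))"
    using ne p ss by (simp add: field_simps)
  show ?thesis
    apply (rule DERIV_cong[OF DERIV_inverse_fun[OF h2 ne, unfolded inverse_eq_divide]])
    using ne p ss by (simp add: field_simps power2_eq_square)
qed

lemma z:
  fixes w x0 :: "'a::real_vector"
  assumes a: "0 < a" "a < 1" and S: "S = 1 - a" and q: "q > 0" "q * q = S"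
  shows "(1 / q) *\<^sub>R (((d / (2 * a)) *\<^sub>R (w + sqrt a *\<^sub>R x0) - (1/2 * (- d / a)) *\<^sub>R (- ((1 / S) *\<^sub>R w))) - (d / (2 * sqrt a)) *\<^sub>R x0) + (d / (2 * S * q)) *\<^sub>R w = 0"
proof -
  have sa: "sqrt a * sqrt a = a" using a by simp
  have "(1 / q) *\<^sub>R (((d / (2 * a)) *\<^sub>R (w + sqrt a *\<^sub>R x0) - (1/2 * (- d / a)) *\<^sub>R (- ((1 / S) *\<^sub>R w))) - (d / (2 * sqrt a)) *\<^sub>R x0) + (d / (2 * S * q)) *\<^sub>R w
    = ((1/q) * (d / (2 * a)) - (1/q) * (d / (2 * a * S)) + d / (2 * S * q)) *\<^sub>R w + ((1/q) * (d / (2 * a) * sqrt a - d / (2 * sqrt a))) *\<^sub>R x0"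
    by (simp add: algebra_simps)
  also have "(1/q) * (d / (2 * a)) - (1/q) * (d / (2 * a * S)) + d / (2 * S * q) = 0"
    using a q unfolding S by (simp add: field_simps)
  also have "d / (2 * a) * sqrt a - d / (2 * sqrt a) = 0"
    using a sa by (simp add: field_simps)
  finally show ?thesis by simp
qed

theorem proposition1:
  fixes \<alpha> :: "real \<Rightarrow> real" and T :: real and x0 :: "real^'n"
    and u :: "real \<Rightarrow> real^'n"
  assumes T_pos: "T > 0"
    and \<alpha>_C1: "\<exists>\<alpha>'. continuous_on {0..T} \<alpha>' \<and>
                 (\<forall>t\<in>{0..T}. (\<alpha> has_real_derivative \<alpha>' t) (at t within {0..T}))"
    and \<alpha>_range: "\<forall>t\<in>{0..T}. \<alpha> t \<in> {0..1}"
    and \<alpha>_decr: "\<forall>s t. 0 \<le> s \<and> s < t \<and> t \<le> T \<longrightarrow> \<alpha> t < \<alpha> s"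
    and \<alpha>_0: "\<alpha> 0 = 1" and \<alpha>_T: "\<alpha> T = 0"
    and ode: "\<forall>t\<in>{0<..<T}. (u has_vector_derivative
                 (Fcoef \<alpha> t *\<^sub>R u t
                  - (1/2 * (Gcoef \<alpha> t * Gcoef \<alpha> t)) *\<^sub>R score \<alpha> x0 t (u t))) (at t)"
  shows "\<exists>c. (\<forall>t\<in>{0<..<T}. eps_GT \<alpha> x0 (u t) t = c) \<and>
             (\<forall>uT. (u \<longlongrightarrow> uT) (at_left T) \<longrightarrow>
                    c = - score \<alpha> x0 T uT \<and> c = uT)"
proof -
  obtain \<alpha>' where \<alpha>'c: "continuous_on {0..T} \<alpha>'"
    and \<alpha>'d0: "\<forall>t\<in>{0..T}. (\<alpha> has_real_derivative \<alpha>' t) (at t within {0..T})"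
    using \<alpha>_C1 by (elim exE conjE)
  have \<alpha>'d: "(\<alpha> has_real_derivative \<alpha>' t) (at t within {0..T})" if "t\<in>{0..T}" for t
    using \<alpha>'d0 that by (rule bspec)
  have arange: "0 < \<alpha> t \<and> \<alpha> t < 1" if "t \<in> {0<..<T}" for t
  proof -
    have "\<alpha> t < \<alpha> 0" using that by (intro \<alpha>_decr[rule_format]) simp
    moreover have "\<alpha> T < \<alpha> t" using that by (intro \<alpha>_decr[rule_format]) simp
    ultimately show ?thesis using \<alpha>_0 \<alpha>_T by simp
  qed
  have dat: "(\<alpha> has_real_derivative \<alpha>' t) (at t)" if t: "t \<in> {0<..<T}" for t
  proof -
    have "(\<alpha> has_real_derivative \<alpha>' t) (at t within {0<..<T})"
      by (rule DERIV_subset[OF \<alpha>'d]) (use t in auto)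
    moreover have eq: "at t within {0<..<T} = at t" using t by (intro at_within_open) auto
    ultimately show ?thesis by simp
  qed
  have dneg: "\<alpha>' t \<le> 0" if t: "t \<in> {0<..<T}" for t
  proof (rule ccontr)
    assume "\<not> \<alpha>' t \<le> 0"
    then obtain d where d: "d > 0" "\<And>h. h > 0 \<Longrightarrow> h < d \<Longrightarrow> \<alpha> t < \<alpha> (t + h)"
      using DERIV_pos_inc_right[OF dat[OF t]] by force
    define h where "h = min (d/2) ((T - t)/2)"
    have h1: "h > 0" "h < d" using d t by (auto simp: h_def min_def)
    have "h \<le> (T - t)/2" unfolding h_def by (rule min.cobounded2)
    then have "t + h \<le> T" using t by simp
    note h1 this
    then have "\<alpha> t < \<alpha> (t + h)" "\<alpha> (t + h) < \<alpha> t"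
      using d(2) \<alpha>_decr[rule_format, of t "t + h"] t by auto
    then show False by simp
  qed
  have lnd: "deriv (\<lambda>s. ln (\<alpha> s)) t = \<alpha>' t / \<alpha> t" if t: "t \<in> {0<..<T}" for t
  proof -
    have "((\<lambda>s. ln (\<alpha> s)) has_real_derivative (1 / \<alpha> t) * \<alpha>' t) (at t)"
      using arange[OF t] by (auto intro!: derivative_eq_intros dat[OF t])
    then show ?thesis by (simp add: DERIV_imp_deriv)
  qed
  have scoreq: "score \<alpha> x0 t v = - ((1 / (1 - \<alpha> t)) *\<^sub>R (v - sqrt (\<alpha> t) *\<^sub>R x0))"
    if "\<alpha> t < 1" for t v
    unfolding score_def marg_def using that by (simp add: grad_gauss)
  define E where "E t = (1 / sqrt (1 - \<alpha> t)) *\<^sub>R (u t - sqrt (\<alpha> t) *\<^sub>R x0)" for t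
  have epsE: "eps_GT \<alpha> x0 (u t) t = E t" if "\<alpha> t < 1" for t
  proof -
    have "sqrt (1 - \<alpha> t) * (1 / (1 - \<alpha> t)) = 1 / sqrt (1 - \<alpha> t)"
    proof -
      have p: "0 < 1 - \<alpha> t" using that by simp
      have sq: "sqrt (1 - \<alpha> t) * sqrt (1 - \<alpha> t) = 1 - \<alpha> t" using p by simp
      have "sqrt (1 - \<alpha> t) > 0" using p by simp
      then show ?thesis using sq p by (simp add: field_simps)
    qed
    then show ?thesis using that unfolding eps_GT_def E_def
      by (simp add: scoreq)
  qed
  have Ed: "(E has_vector_derivative 0) (at t)" if t: "t \<in> {0<..<T}" for t
  proof -
    define a where "a = \<alpha> t"
    define d where "d = \<alpha>' t"
    define S where "S = 1 - a"
    define q where "q = sqrt S"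
    define w where "w = u t - sqrt a *\<^sub>R x0"
    have a: "0 < a" "a < 1" using arange[OF t] by (auto simp: a_def)
    have S: "S > 0" "q > 0" "q * q = S" using a by (auto simp: S_def q_def)
    have dn: "d \<le> 0" using dneg[OF t] by (simp add: d_def)
    have F: "Fcoef \<alpha> t = d / (2 * a)" using lnd[OF t] by (simp add: Fcoef_def a_def d_def)
    have G: "Gcoef \<alpha> t * Gcoef \<alpha> t = - d / a"
      using lnd[OF t] dn a unfolding Gcoef_def
      by (simp add: a_def d_def divide_nonpos_pos)
    define u' where "u' = (d / (2 * a)) *\<^sub>R u t - (1/2 * (- d / a)) *\<^sub>R (- ((1 / S) *\<^sub>R w))"
    have ud: "(u has_vector_derivative u') (at t)"
      using ode[rule_format, OF t] unfolding u'_def F G scoreq[OF a(2)[unfolded a_def]]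
      by (simp add: S_def w_def a_def)
    have sd: "((\<lambda>t. sqrt (\<alpha> t)) has_real_derivative d / (2 * sqrt a)) (at t)"
      using a by (auto intro!: derivative_eq_intros dat[OF t] simp: a_def d_def field_simps)
    have gd: "((\<lambda>t. u t - sqrt (\<alpha> t) *\<^sub>R x0) has_vector_derivative
               (u' - (d / (2 * sqrt a)) *\<^sub>R x0)) (at t)"
      using has_vector_derivative_diff[OF ud has_vector_derivative_scaleR[OF sd has_vector_derivative_const[of x0]]]
      by simp
    have fd: "((\<lambda>t. 1 / sqrt (1 - \<alpha> t)) has_real_derivative d / (2 * S * q)) (at t)"
      unfolding S_def q_def a_def d_def by (rule fdl[OF dat[OF t]]) (use arange[OF t] in simp)
    have "(E has_vector_derivative ((1 / q) *\<^sub>R (u' - (d / (2 * sqrt a)) *\<^sub>R x0) + (d / (2 * S * q)) *\<^sub>R w)) (at t)"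
      unfolding E_def[abs_def] using has_vector_derivative_scaleR[OF fd gd]
      by (simp add: q_def S_def a_def w_def)
    moreover have "(1 / q) *\<^sub>R (u' - (d / (2 * sqrt a)) *\<^sub>R x0) + (d / (2 * S * q)) *\<^sub>R w = 0"
    proof -
      have "u t = w + sqrt a *\<^sub>R x0" by (simp add: w_def)
      then show ?thesis unfolding u'_def using z[OF a S_def S(2) S(3)] by simp
    qed
    ultimately show ?thesis by simp
  qed
  have "\<exists>c. \<forall>t\<in>{0<..<T}. E t = c"
  proof (rule has_derivative_zero_constant)
    fix t assume "t \<in> {0<..<T}"
    from Ed[OF this] show "(E has_derivative (\<lambda>h. 0)) (at t within {0<..<T})"
      unfolding has_vector_derivative_def by (auto intro: has_derivative_at_withinI)
  qed simp
  then obtain c where c: "\<And>t. t\<in>{0<..<T} \<Longrightarrow> E t = c" by blast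
  show ?thesis
  proof (intro exI conjI ballI allI impI)
    fix t assume t: "t \<in> {0<..<T}"
    show "eps_GT \<alpha> x0 (u t) t = c" using epsE[of t] arange[OF t] c[OF t] by simp
  next
    fix uT assume uT: "(u \<longlongrightarrow> uT) (at_left T)"
    have "continuous (at T within {0..T}) \<alpha>"
      using \<alpha>'d[of T] T_pos by (auto intro: DERIV_continuous)
    then have "(\<alpha> \<longlongrightarrow> 0) (at_left T)"
      using T_pos \<alpha>_T by (simp add: continuous_within at_within_Icc_at_left)
    then have "(E \<longlongrightarrow> (1 / sqrt (1 - 0)) *\<^sub>R (uT - sqrt 0 *\<^sub>R x0)) (at_left T)"
      unfolding E_def[abs_def] by (intro tendsto_intros uT) auto
    then have EL: "(E \<longlongrightarrow> uT) (at_left T)" by simp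
    have ev: "eventually (\<lambda>t. E t = c) (at_left T)"
      using eventually_at_left_real[OF T_pos] by eventually_elim (simp add: c)
    have "((\<lambda>_. c) \<longlongrightarrow> uT) (at_left T)"
      by (rule Lim_transform_eventually[OF EL ev])
    then show cu: "c = uT" using tendsto_const_iff[OF trivial_limit_at_left_real[of T], of c uT] by simp
    show "c = - score \<alpha> x0 T uT" using cu \<alpha>_T by (simp add: scoreq)
  qed
qed

end
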